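(* Let $r\ge 2$ and let $F$ be a graph with chromatic number $\chi(F)=r+1$ that has a color-critical edge; let $t=|V(F)|$. There exists $\varepsilon_0>0$ such that for every $0<\varepsilon<\varepsilon_0$ there is $n_0$ with the following property. Let $G$ be an $F$-free graph on $n\ge n_0$ vertices, and let $U_1,\dots,U_r$ be pairwise disjoint subsets of $V(G)$ with $|U_i|\ge rt\varepsilon n+t$ for every $i$, such that for every $i$, every $v\in U_i$ and every $j\ne i$ we have $|N_G(v)\cap U_j|\ge |U_j|-\varepsilon n$. Then: (i) each of $U_1,\dots,U_r$ is an independent set in $G$; (ii) for every vertex $x\in V(G)\setminus(U_1\cup\dots\cup U_r)$ there is an index $i\in\{1,\dots,r\}$ such that $x$ has at most $\varepsilon r t n$ neighbors in $U_i$.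
   Context: An edge $e$ of a graph $F$ is color-critical if $\chi(F-e)<\chi(F)$. A graph is $F$-free if it has no subgraph isomorphic to $F$. $N_G(v)$ denotes the set of neighbors of $v$ in $G$. The condition on $U_1,\dots,U_r$ says that the $r$-partite subgraph of $G$ with parts $U_1,\dots,U_r$ is "$\varepsilon$-almost complete": every vertex of a part has at most $\varepsilon n$ non-neighbors in each other part. *)

theory Defs
  imports Complex_Main
begin

definition simple_graph :: "'a set \<Rightarrow> 'a set set \<Rightarrow> bool" where
  "simple_graph V E \<longleftrightarrow> finite V \<and>
     (\<forall>e\<in>E. \<exists>u v. e = {u, v} \<and> u \<noteq> v \<and> u \<in> V \<and> v \<in> V)"

definition colorable :: "'a set \<Rightarrow> 'a set set \<Rightarrow> nat \<Rightarrow> bool" where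
  "colorable V E k \<longleftrightarrow> (\<exists>c :: 'a \<Rightarrow> nat. (\<forall>v\<in>V. c v < k) \<and>
      (\<forall>u\<in>V. \<forall>v\<in>V. {u, v} \<in> E \<longrightarrow> c u \<noteq> c v))"

definition chromatic_number :: "'a set \<Rightarrow> 'a set set \<Rightarrow> nat" where
  "chromatic_number V E = (LEAST k. colorable V E k)"

definition color_critical_edge :: "'a set \<Rightarrow> 'a set set \<Rightarrow> 'a set \<Rightarrow> bool" where
  "color_critical_edge V E e \<longleftrightarrow> e \<in> E \<and>
     chromatic_number V (E - {e}) < chromatic_number V E"

definition contains_subgraph :: "'a set \<Rightarrow> 'a set set \<Rightarrow> 'b set \<Rightarrow> 'b set set \<Rightarrow> bool" where
  "contains_subgraph VG EG VF EF \<longleftrightarrow> (\<exists>f :: 'b \<Rightarrow> 'a. inj_on f VF \<and> f ` VF \<subseteq> VG \<and>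
      (\<forall>u\<in>VF. \<forall>v\<in>VF. {u, v} \<in> EF \<longrightarrow> {f u, f v} \<in> EG))"

definition F_free :: "'a set \<Rightarrow> 'a set set \<Rightarrow> 'b set \<Rightarrow> 'b set set \<Rightarrow> bool" where
  "F_free VG EG VF EF \<longleftrightarrow> \<not> contains_subgraph VG EG VF EF"

definition nbhd :: "'a set \<Rightarrow> 'a set set \<Rightarrow> 'a \<Rightarrow> 'a set" where
  "nbhd V E v = {u \<in> V. {u, v} \<in> E}"

definition independent_set :: "'a set set \<Rightarrow> 'a set \<Rightarrow> bool" where
  "independent_set E U \<longleftrightarrow> (\<forall>u\<in>U. \<forall>v\<in>U. {u, v} \<notin> E)"

end

theory Submission imports Defs begin

lemma greedy:
  fixes W :: "nat \<Rightarrow> 'a set" and col :: "'b \<Rightarrow> nat" and \<delta> :: real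
  assumes "finite S" "\<delta> \<ge> 0"
  and "\<forall>s\<in>S. col s \<in> K"
  and fin: "\<forall>k\<in>K. finite (W k)"
  and nadj: "\<forall>k\<in>K. \<forall>j\<in>K. j \<noteq> k \<longrightarrow> (\<forall>v\<in>W k. real (card (W j - nbhd V E v)) \<le> \<delta>)"
  and "\<forall>k\<in>K. real (card (W k)) > real (card S) * \<delta> + real (card S)"
  shows "\<exists>f. inj_on f S \<and> (\<forall>s\<in>S. f s \<in> W (col s)) \<and>
           (\<forall>s\<in>S. \<forall>s'\<in>S. col s \<noteq> col s' \<longrightarrow> {f s, f s'} \<in> E)"
  using assms(1,3,6)
proof (induction S rule: finite_induct)
  case empty
  then show ?case by auto
next
  case (insert s S)
  have cS: "card (insert s S) = card S + 1" using insert by simp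
  have sz: "\<forall>k\<in>K. real (card (W k)) > real (card S) * \<delta> + real (card S)"
  proof
    fix k assume k: "k \<in> K"
    have "real (card S) * \<delta> + real (card S) \<le> real (card (insert s S)) * \<delta> + real (card (insert s S))"
      using cS \<open>\<delta> \<ge> 0\<close> by (simp add: distrib_right)
    then show "real (card (W k)) > real (card S) * \<delta> + real (card S)" using insert.prems(2) k by force
  qed
  obtain f where f: "inj_on f S" "\<forall>s\<in>S. f s \<in> W (col s)"
     "\<forall>s\<in>S. \<forall>s'\<in>S. col s \<noteq> col s' \<longrightarrow> {f s, f s'} \<in> E"
    using insert.IH insert.prems sz by auto
  define k where "k = col s"
  have kK: "k \<in> K" using insert.prems k_def by auto
  define T where "T = {s'\<in>S. col s' \<noteq> k}"
  define B where "B = f ` S \<union> (\<Union>s'\<in>T. W k - nbhd V E (f s'))"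
  have finT: "finite T" using insert T_def by auto
  have c1: "card (f ` S) \<le> card S" by (rule card_image_le) (use insert in auto)
  have c2: "real (card (\<Union>s'\<in>T. W k - nbhd V E (f s'))) \<le> (\<Sum>s'\<in>T. real (card (W k - nbhd V E (f s'))))"
    using card_UN_le[OF finT, of "\<lambda>s'. W k - nbhd V E (f s')"] by (metis of_nat_le_iff of_nat_sum)
  have c3: "(\<Sum>s'\<in>T. real (card (W k - nbhd V E (f s')))) \<le> real (card T) * \<delta>"
  proof -
    have "\<forall>s'\<in>T. real (card (W k - nbhd V E (f s'))) \<le> \<delta>"
    proof
      fix s' assume s': "s' \<in> T"
      then have "col s' \<in> K" "col s' \<noteq> k" "f s' \<in> W (col s')" using T_def insert.prems f by auto
      then show "real (card (W k - nbhd V E (f s'))) \<le> \<delta>" using nadj kK by auto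
    qed
    then show ?thesis using sum_bounded_above[of T "\<lambda>s'. real (card (W k - nbhd V E (f s')))" \<delta>]
      by (simp add: mult.commute)
  qed
  have c4: "card T \<le> card S" using T_def insert by (intro card_mono) auto
  have "real (card B) \<le> real (card (f ` S)) + real (card (\<Union>s'\<in>T. W k - nbhd V E (f s')))"
    unfolding B_def using card_Un_le by (metis of_nat_add of_nat_le_iff)
  also have "\<dots> \<le> real (card S) + real (card S) * \<delta>"
    using c1 c2 c3 c4 \<open>\<delta> \<ge> 0\<close> mult_right_mono[of "real (card T)" "real (card S)" \<delta>] by linarith
  finally have cB: "real (card B) < real (card (W k))" using sz kK by force
  have "\<not> W k \<subseteq> B"
  proof
    assume "W k \<subseteq> B"
    have "finite B" unfolding B_def using insert finT fin kK by auto
    then have "card (W k) \<le> card B" using \<open>W k \<subseteq> B\<close> card_mono by blast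
    then show False using cB by linarith
  qed
  then obtain w where w: "w \<in> W k" "w \<notin> B" by blast
  define g where "g = f(s := w)"
  have gS: "\<forall>x\<in>S. g x = f x" using insert g_def by auto
  have "inj_on g (insert s S)"
  proof -
    have "inj_on g S" using f(1) gS inj_on_cong by fastforce
    moreover have "g s \<notin> g ` S" using w gS B_def g_def by auto
    ultimately show ?thesis by auto
  qed
  moreover have "\<forall>x\<in>insert s S. g x \<in> W (col x)" using gS f w g_def k_def by auto
  moreover have "\<forall>x\<in>insert s S. \<forall>y\<in>insert s S. col x \<noteq> col y \<longrightarrow> {g x, g y} \<in> E"
  proof (intro ballI impI)
    fix x y assume x: "x \<in> insert s S" and y: "y \<in> insert s S" and cxy: "col x \<noteq> col y"
    have adj: "{w, f s'} \<in> E" if "s' \<in> S" "col s' \<noteq> k" for s'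
    proof -
      have "s' \<in> T" using that T_def by auto
      then have "w \<in> nbhd V E (f s')" using w B_def by auto
      then show ?thesis unfolding nbhd_def by auto
    qed
    show "{g x, g y} \<in> E"
    proof (cases "x = s")
      case True
      then have "y \<noteq> s" using cxy by auto
      then have "y \<in> S" using y by auto
      then show ?thesis using adj True cxy gS g_def k_def by auto
    next
      case False
      then have xS: "x \<in> S" using x by auto
      show ?thesis
      proof (cases "y = s")
        case True
        then show ?thesis using adj[OF xS] cxy gS g_def k_def xS by (auto simp: insert_commute)
      next
        case False
        then show ?thesis using xS y f(3) gS cxy by auto
      qed
    qed
  qed
  ultimately show ?case by blast
qed


lemma colorable_card:
  assumes "simple_graph V E" "E' \<subseteq> E"
  shows "colorable V E' (card V)"
proof -
  have "finite V" using assms unfolding simple_graph_def by auto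
  then obtain h where h: "bij_betw h V {0..<card V}" using ex_bij_betw_finite_nat by blast
  have "\<forall>v\<in>V. h v < card V" using h bij_betwE by fastforce
  moreover have "\<forall>u\<in>V. \<forall>v\<in>V. {u, v} \<in> E' \<longrightarrow> h u \<noteq> h v"
  proof (intro ballI impI)
    fix u v assume uv: "u \<in> V" "v \<in> V" "{u, v} \<in> E'"
    then have "{u,v} \<in> E" using assms by auto
    then obtain p q where "{u,v} = {p,q}" "p \<noteq> q" using assms unfolding simple_graph_def by blast
    then have "u \<noteq> v" by (metis doubleton_eq_iff)
    then show "h u \<noteq> h v" using h uv unfolding bij_betw_def inj_on_def by auto
  qed
  ultimately show ?thesis unfolding colorable_def by blast
qed

lemma colorable_mono: "colorable V E k \<Longrightarrow> k \<le> k' \<Longrightarrow> colorable V E k'"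
  unfolding colorable_def by (meson less_le_trans)

lemma crit_coloring:
  assumes sg: "simple_graph VF EF" and ch: "chromatic_number VF EF = r + 1"
    and cc: "color_critical_edge VF EF e"
  shows "\<exists>a b c. e = {a,b} \<and> a \<noteq> b \<and> a \<in> VF \<and> b \<in> VF \<and> (\<forall>v\<in>VF. c v < r) \<and>
     (\<forall>u\<in>VF. \<forall>v\<in>VF. {u,v} \<in> EF \<and> {u,v} \<noteq> e \<longrightarrow> c u \<noteq> c v) \<and> c a = c b"
proof -
  have eE: "e \<in> EF" and lt: "chromatic_number VF (EF - {e}) < r + 1"
    using cc ch unfolding color_critical_edge_def by auto
  obtain a b where ab: "e = {a,b}" "a \<noteq> b" "a \<in> VF" "b \<in> VF" using sg eE unfolding simple_graph_def by blast
  have "colorable VF (EF - {e}) (card VF)" using colorable_card[OF sg] by auto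
  then have "colorable VF (EF - {e}) (chromatic_number VF (EF - {e}))"
    unfolding chromatic_number_def by (rule LeastI)
  then have "colorable VF (EF - {e}) r" using lt colorable_mono by fastforce
  then obtain c where c: "\<forall>v\<in>VF. c v < r" "\<forall>u\<in>VF. \<forall>v\<in>VF. {u, v} \<in> EF - {e} \<longrightarrow> c u \<noteq> c v"
    unfolding colorable_def by blast
  have ncol: "\<not> colorable VF EF r"
  proof
    assume "colorable VF EF r"
    then have "chromatic_number VF EF \<le> r" unfolding chromatic_number_def by (rule Least_le)
    then show False using ch by simp
  qed
  have "c a = c b"
  proof (rule ccontr)
    assume nab: "c a \<noteq> c b"
    have "\<forall>u\<in>VF. \<forall>v\<in>VF. {u, v} \<in> EF \<longrightarrow> c u \<noteq> c v"
    proof (intro ballI impI)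
      fix u v assume uv: "u \<in> VF" "v \<in> VF" "{u,v} \<in> EF"
      show "c u \<noteq> c v"
      proof (cases "{u,v} = e")
        case True
        then have "(u = a \<and> v = b) \<or> (u = b \<and> v = a)" using ab by (metis doubleton_eq_iff)
        then show ?thesis using nab by auto
      next
        case False
        then show ?thesis using c uv by auto
      qed
    qed
    then have "colorable VF EF r" using c(1) unfolding colorable_def by blast
    then show False using ncol by simp
  qed
  then show ?thesis using ab c by blast
qed

lemma recolor:
  assumes "\<forall>v\<in>VF. c v < r" "\<forall>u\<in>VF. \<forall>v\<in>VF. {u,v} \<in> EF \<and> {u,v} \<noteq> e \<longrightarrow> c u \<noteq> c v"
    "c a = c b" "m < r" "a \<in> VF"
  shows "\<exists>c'. (\<forall>v\<in>VF. c' v < r) \<and>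
     (\<forall>u\<in>VF. \<forall>v\<in>VF. {u,v} \<in> EF \<and> {u,v} \<noteq> e \<longrightarrow> c' u \<noteq> c' v) \<and> c' a = c' b \<and> c' a = m"
proof -
  define c' where "c' v = (if c v = c a then m else if c v = m then c a else c v)" for v
  have "\<forall>v\<in>VF. c' v < r" using assms unfolding c'_def by auto
  moreover have "\<forall>u\<in>VF. \<forall>v\<in>VF. {u,v} \<in> EF \<and> {u,v} \<noteq> e \<longrightarrow> c' u \<noteq> c' v"
    using assms(2) unfolding c'_def by (metis (no_types, opaque_lifting))
  moreover have "c' a = c' b" "c' a = m" using assms unfolding c'_def by auto
  ultimately show ?thesis by blast
qed

lemma nonnb:
  assumes "X \<subseteq> Y" "finite Y" "real (card (N \<inter> Y)) \<ge> real (card Y) - d"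
  shows "real (card (X - N)) \<le> d"
proof -
  have "card (X - N) \<le> card (Y - N)" using assms by (intro card_mono) auto
  moreover have "card (Y - N) = card Y - card (Y \<inter> N)" using assms by (intro card_Diff_subset_Int) auto
  moreover have "card (Y \<inter> N) \<le> card Y" using assms by (intro card_mono) auto
  ultimately show ?thesis using assms(3) by (simp add: Int_commute)
qed


lemma sg_edge_neq: "simple_graph V E \<Longrightarrow> {x, y} \<in> E \<Longrightarrow> x \<noteq> y"
  unfolding simple_graph_def by (metis doubleton_eq_iff insert_absorb2)

lemma sg_edge_in: "simple_graph V E \<Longrightarrow> {x, y} \<in> E \<Longrightarrow> x \<in> V \<and> y \<in> V"
  unfolding simple_graph_def by (metis doubleton_eq_iff)

lemma card_three:
  assumes "finite Y"
  shows "card Y \<le> card (Y \<inter> A \<inter> B) + card (Y - A) + card (Y - B)"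
proof -
  have "Y = (Y \<inter> A \<inter> B) \<union> (Y - A) \<union> (Y - B)" by auto
  then have "card Y \<le> card ((Y \<inter> A \<inter> B) \<union> (Y - A)) + card (Y - B)" by (metis card_Un_le)
  also have "\<dots> \<le> card (Y \<inter> A \<inter> B) + card (Y - A) + card (Y - B)" using card_Un_le by simp
  finally show ?thesis .
qed

lemma part_i:
  fixes VF :: "'b set" and U :: "nat \<Rightarrow> nat set" and \<epsilon> :: real
  assumes sgF: "simple_graph VF EF" and r2: "r \<ge> 2"
    and ab: "e = {a,b}" "a \<noteq> b" "a \<in> VF" "b \<in> VF"
    and c: "\<forall>v\<in>VF. c v < r" "\<forall>u\<in>VF. \<forall>v\<in>VF. {u,v} \<in> EF \<and> {u,v} \<noteq> e \<longrightarrow> c u \<noteq> c v" "c a = c b"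
    and sg: "simple_graph V E" and free: "F_free V E VF EF"
    and Usub: "\<forall>i\<in>{1..r}. U i \<subseteq> V"
    and disj: "\<forall>i\<in>{1..r}. \<forall>j\<in>{1..r}. i \<noteq> j \<longrightarrow> U i \<inter> U j = {}"
    and size: "\<forall>i\<in>{1..r}. real (card (U i)) \<ge> real r * real (card VF) * \<epsilon> * real (card V) + real (card VF)"
    and nb: "\<forall>i\<in>{1..r}. \<forall>v\<in>U i. \<forall>j\<in>{1..r}. j \<noteq> i \<longrightarrow>
             real (card (nbhd V E v \<inter> U j)) \<ge> real (card (U j)) - \<epsilon> * real (card V)"
    and eps: "\<epsilon> > 0"
    and i: "i \<in> {1..r}"
  shows "independent_set E (U i)"
proof (rule ccontr)
  assume "\<not> independent_set E (U i)"
  then obtain u v where uv: "u \<in> U i" "v \<in> U i" "{u,v} \<in> E" unfolding independent_set_def by blast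
  have unv: "u \<noteq> v" using sg_edge_neq[OF sg uv(3)] .
  have m: "i - 1 < r" using i by auto
  obtain c' where c': "\<forall>v\<in>VF. c' v < r" "\<forall>u\<in>VF. \<forall>v\<in>VF. {u,v} \<in> EF \<and> {u,v} \<noteq> e \<longrightarrow> c' u \<noteq> c' v"
     "c' a = c' b" "c' a = i - 1"
    using recolor[OF c m ab(3)] by blast
  have finV: "finite V" using sg unfolding simple_graph_def by auto
  have finVF: "finite VF" using sgF unfolding simple_graph_def by auto
  define n where "n = card V"
  define t where "t = card VF"
  define \<delta> where "\<delta> = \<epsilon> * real n"
  define K where "K = {0..<r}"
  define S where "S = VF - {a,b}"
  define W where "W k = (if k = i - 1 then U i - {u,v} else U (Suc k) \<inter> nbhd V E u \<inter> nbhd V E v)" for k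
  have SucK: "k \<in> K \<Longrightarrow> Suc k \<in> {1..r}" for k using K_def by auto
  have Wsub: "k \<in> K \<Longrightarrow> W k \<subseteq> U (Suc k)" for k using i unfolding W_def by auto
  have UV: "k \<in> K \<Longrightarrow> U (Suc k) \<subseteq> V" for k using Usub SucK by auto
  have finU: "k \<in> K \<Longrightarrow> finite (U (Suc k))" for k using UV finV finite_subset by blast
  have "U i \<noteq> {}" using uv by auto
  then have "n > 0" using Usub i finV n_def by (metis card_gt_0_iff subset_empty)
  then have dpos: "\<delta> > 0" using eps \<delta>_def by simp
  have t2: "t \<ge> 2"
  proof -
    have "{a,b} \<subseteq> VF" using ab by auto
    then have "card {a,b} \<le> t" using finVF t_def card_mono by blast
    then show ?thesis using ab by simp
  qed
  have cS: "card S = t - 2" using ab finVF unfolding S_def t_def by (simp add: card_Diff_subset)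
  have big: "real r * real t * \<epsilon> * real n \<ge> 2 * real t * \<delta>"
  proof -
    have "real r * (real t * \<delta>) \<ge> 2 * (real t * \<delta>)" using r2 dpos by (intro mult_right_mono) auto
    then show ?thesis unfolding \<delta>_def by (simp add: algebra_simps)
  qed
  have sizeU: "k \<in> K \<Longrightarrow> real (card (U (Suc k))) \<ge> 2 * real t * \<delta> + real t" for k
    using size SucK big unfolding t_def n_def by force
  have nadj: "\<forall>k\<in>K. \<forall>j\<in>K. j \<noteq> k \<longrightarrow> (\<forall>w\<in>W k. real (card (W j - nbhd V E w)) \<le> \<delta>)"
  proof (intro ballI impI)
    fix k j w assume k: "k \<in> K" and j: "j \<in> K" and jk: "j \<noteq> k" and w: "w \<in> W k"
    have "w \<in> U (Suc k)" using Wsub k w by auto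
    then have "real (card (nbhd V E w \<inter> U (Suc j))) \<ge> real (card (U (Suc j))) - \<delta>"
      using nb[rule_format, OF SucK[OF k] \<open>w \<in> U (Suc k)\<close> SucK[OF j]] jk unfolding \<delta>_def n_def by auto
    then show "real (card (W j - nbhd V E w)) \<le> \<delta>" using nonnb Wsub[OF j] finU[OF j] by blast
  qed
  have sizeW: "\<forall>k\<in>K. real (card (W k)) > real (card S) * \<delta> + real (card S)"
  proof
    fix k assume k: "k \<in> K"
    have rhs: "real (card S) * \<delta> + real (card S) = (real t - 2) * \<delta> + real t - 2" using cS t2 by simp
    have key: "(real t - 2) * \<delta> + 2 * \<delta> < 2 * real t * \<delta>"
    proof -
      have "2 * real t * \<delta> - ((real t - 2) * \<delta> + 2 * \<delta>) = real t * \<delta>" by (simp add: algebra_simps)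
      moreover have "real t * \<delta> > 0" using t2 dpos by simp
      ultimately show ?thesis by linarith
    qed
    show "real (card (W k)) > real (card S) * \<delta> + real (card S)"
    proof (cases "k = i - 1")
      case True
      then have "Suc k = i" using i by auto
      have "card (W k) = card (U i) - 2" using True uv unv unfolding W_def by (simp add: card_Diff_subset)
      moreover have "card (U i) \<ge> 2"
      proof -
        have "{u,v} \<subseteq> U i" using uv by auto
        then show ?thesis using card_mono finU[OF k] \<open>Suc k = i\<close> unv by (metis card_2_iff)
      qed
      ultimately have "real (card (W k)) = real (card (U i)) - 2" by simp
      then show ?thesis using rhs sizeU[OF k] \<open>Suc k = i\<close> dpos key by simp
    next
      case False
      then have WD: "W k = U (Suc k) \<inter> nbhd V E u \<inter> nbhd V E v" unfolding W_def by simp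
      have ne: "Suc k \<noteq> i" using False by auto
      have du: "real (card (U (Suc k) - nbhd V E u)) \<le> \<delta>"
        using nonnb[where X="U (Suc k)" and Y="U (Suc k)" and N="nbhd V E u" and d=\<delta>] nb[rule_format, OF i uv(1) SucK[OF k]] ne finU[OF k]
        unfolding \<delta>_def n_def by auto
      have dv: "real (card (U (Suc k) - nbhd V E v)) \<le> \<delta>"
        using nonnb[where X="U (Suc k)" and Y="U (Suc k)" and N="nbhd V E v" and d=\<delta>] nb[rule_format, OF i uv(2) SucK[OF k]] ne finU[OF k]
        unfolding \<delta>_def n_def by auto
      have "real (card (U (Suc k))) \<le> real (card (W k)) + \<delta> + \<delta>"
      proof -
        have "real (card (U (Suc k))) \<le> real (card (U (Suc k) \<inter> nbhd V E u \<inter> nbhd V E v)) + real (card (U (Suc k) - nbhd V E u)) + real (card (U (Suc k) - nbhd V E v))"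
          using card_three[OF finU[OF k], of "nbhd V E u" "nbhd V E v"] by linarith
        then show ?thesis using du dv unfolding WD by linarith
      qed
      then show ?thesis using rhs sizeU[OF k] dpos key by linarith
    qed
  qed
  have finS: "finite S" using finVF S_def by auto
  have colS: "\<forall>s\<in>S. c' s \<in> K" using c' K_def S_def by auto
  have finW: "\<forall>k\<in>K. finite (W k)" using Wsub finU finite_subset by blast
  obtain f where f: "inj_on f S" "\<forall>s\<in>S. f s \<in> W (c' s)"
     "\<forall>s\<in>S. \<forall>s'\<in>S. c' s \<noteq> c' s' \<longrightarrow> {f s, f s'} \<in> E"
    using greedy[OF finS less_imp_le[OF dpos] colS finW nadj sizeW] by blast
  have fnot: "f s \<noteq> u \<and> f s \<noteq> v" if s: "s \<in> S" for s
  proof (cases "c' s = i - 1")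
    case True
    then show ?thesis using f(2) s unfolding W_def by auto
  next
    case False
    have ck: "c' s \<in> K" using colS s by auto
    then have "f s \<in> U (Suc (c' s))" using f(2) s Wsub by auto
    moreover have "Suc (c' s) \<noteq> i" using False by auto
    ultimately show ?thesis using disj SucK[OF ck] i uv by blast
  qed
  have fV: "f s \<in> V" if s: "s \<in> S" for s using f(2) s Wsub UV colS by blast
  have fnb: "{f s, u} \<in> E \<and> {f s, v} \<in> E" if s: "s \<in> S" and cs: "c' s \<noteq> i - 1" for s
    using f(2) s cs unfolding W_def nbhd_def by auto
  define g where "g = f(a := u, b := v)"
  have ga: "g a = u" and gb: "g b = v" using g_def ab by auto
  have gS: "s \<in> S \<Longrightarrow> g s = f s" for s using g_def S_def by auto
  have VFsplit: "x \<in> VF \<Longrightarrow> x = a \<or> x = b \<or> x \<in> S" for x using S_def by auto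
  have "contains_subgraph V E VF EF"
    unfolding contains_subgraph_def
  proof (intro exI conjI)
    show "inj_on g VF"
    proof (rule inj_onI)
      fix x y assume x: "x \<in> VF" and y: "y \<in> VF" and gxy: "g x = g y"
      show "x = y"
        using VFsplit[OF x] VFsplit[OF y] gxy ga gb gS fnot unv f(1) unfolding inj_on_def
        by (metis)
    qed
    show "g ` VF \<subseteq> V"
    proof
      fix y assume "y \<in> g ` VF"
      then obtain x where x: "x \<in> VF" "y = g x" by blast
      have "u \<in> V" "v \<in> V" using uv Usub i by auto
      then show "y \<in> V" using VFsplit[OF x(1)] x ga gb gS fV by metis
    qed
    show "\<forall>p\<in>VF. \<forall>q\<in>VF. {p, q} \<in> EF \<longrightarrow> {g p, g q} \<in> E"
    proof (intro ballI impI)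
      fix p q assume p: "p \<in> VF" and q: "q \<in> VF" and pq: "{p,q} \<in> EF"
      have pnq: "p \<noteq> q" using sg_edge_neq[OF sgF pq] .
      have ccol: "c' p \<noteq> c' q" if "p \<in> S \<or> q \<in> S" using c'(2) p q pq that ab S_def
        by (metis DiffD2 doubleton_eq_iff insertCI)
      consider "p \<in> S" "q \<in> S" | "p \<in> S" "q \<notin> S" | "p \<notin> S" "q \<in> S" | "p \<notin> S" "q \<notin> S" by blast
      then show "{g p, g q} \<in> E"
      proof cases
        case 1 then show ?thesis using f(3) ccol gS by auto
      next
        case 2
        then have "q = a \<or> q = b" using q S_def by auto
        then have "c' q = i - 1" using c' by auto
        then have "c' p \<noteq> i - 1" using ccol 2 by auto
        then show ?thesis using fnb[OF 2(1)] \<open>q = a \<or> q = b\<close> ga gb gS[OF 2(1)] by auto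
      next
        case 3
        then have "p = a \<or> p = b" using p S_def by auto
        then have "c' p = i - 1" using c' by auto
        then have "c' q \<noteq> i - 1" using ccol 3 by auto
        then show ?thesis using fnb[OF 3(2)] \<open>p = a \<or> p = b\<close> ga gb gS[OF 3(2)] by (auto simp: insert_commute)
      next
        case 4
        then have "(p = a \<and> q = b) \<or> (p = b \<and> q = a)" using p q pnq S_def by auto
        then show ?thesis using ga gb uv(3) by (auto simp: insert_commute)
      qed
    qed
  qed
  then show False using free unfolding F_free_def by simp
qed


lemma part_ii:
  fixes VF :: "'b set" and U :: "nat \<Rightarrow> nat set" and \<epsilon> :: real
  assumes sgF: "simple_graph VF EF" and r2: "r \<ge> 2"
    and ab: "e = {a,b}" "a \<noteq> b" "a \<in> VF" "b \<in> VF"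
    and c: "\<forall>v\<in>VF. c v < r" "\<forall>u\<in>VF. \<forall>v\<in>VF. {u,v} \<in> EF \<and> {u,v} \<noteq> e \<longrightarrow> c u \<noteq> c v" "c a = c b"
    and sg: "simple_graph V E" and free: "F_free V E VF EF"
    and Usub: "\<forall>i\<in>{1..r}. U i \<subseteq> V"
    and nb: "\<forall>i\<in>{1..r}. \<forall>v\<in>U i. \<forall>j\<in>{1..r}. j \<noteq> i \<longrightarrow>
             real (card (nbhd V E v \<inter> U j)) \<ge> real (card (U j)) - \<epsilon> * real (card V)"
    and eps: "\<epsilon> > 0" and nlarge: "\<epsilon> * real (card V) \<ge> 1"
    and x: "x \<in> V - (\<Union>i\<in>{1..r}. U i)"
  shows "\<exists>i\<in>{1..r}. real (card (nbhd V E x \<inter> U i)) \<le> \<epsilon> * real r * real (card VF) * real (card V)"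
proof (rule ccontr)
  assume "\<not> ?thesis"
  then have many: "\<forall>i\<in>{1..r}. real (card (nbhd V E x \<inter> U i)) > \<epsilon> * real r * real (card VF) * real (card V)"
    by auto
  have finV: "finite V" using sg unfolding simple_graph_def by auto
  have finVF: "finite VF" using sgF unfolding simple_graph_def by auto
  define n where "n = card V"
  define t where "t = card VF"
  define \<delta> where "\<delta> = \<epsilon> * real n"
  define K where "K = {0..<r}"
  define S where "S = VF - {a}"
  define W where "W k = nbhd V E x \<inter> U (Suc k)" for k
  have SucK: "k \<in> K \<Longrightarrow> Suc k \<in> {1..r}" for k using K_def by auto
  have Wsub: "k \<in> K \<Longrightarrow> W k \<subseteq> U (Suc k)" for k unfolding W_def by auto
  have UV: "k \<in> K \<Longrightarrow> U (Suc k) \<subseteq> V" for k using Usub SucK by auto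
  have finU: "k \<in> K \<Longrightarrow> finite (U (Suc k))" for k using UV finV finite_subset by blast
  have d1: "\<delta> \<ge> 1" using nlarge \<delta>_def n_def by simp
  have t1: "t \<ge> 1" using ab finVF t_def by (metis One_nat_def Suc_leI card_gt_0_iff empty_iff)
  have cS: "card S = t - 1" using ab finVF unfolding S_def t_def by simp
  have big: "\<epsilon> * real r * real t * real n \<ge> 2 * real t * \<delta>"
  proof -
    have "real r * (real t * \<delta>) \<ge> 2 * (real t * \<delta>)" using r2 d1 by (intro mult_right_mono) auto
    then show ?thesis unfolding \<delta>_def by (simp add: algebra_simps)
  qed
  have key: "(real t - 1) * \<delta> + (real t - 1) < 2 * real t * \<delta>"
  proof -
    have e1: "(real t - 1) * \<delta> + (real t - 1) = real t * \<delta> - \<delta> + real t - 1" by (simp add: algebra_simps)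
    have e2: "2 * real t * \<delta> = real t * \<delta> + real t * \<delta>" by simp
    have "real t * \<delta> \<ge> real t * 1" using d1 by (intro mult_left_mono) auto
    then show ?thesis using e1 e2 d1 by linarith
  qed
  have nadj: "\<forall>k\<in>K. \<forall>j\<in>K. j \<noteq> k \<longrightarrow> (\<forall>w\<in>W k. real (card (W j - nbhd V E w)) \<le> \<delta>)"
  proof (intro ballI impI)
    fix k j w assume k: "k \<in> K" and j: "j \<in> K" and jk: "j \<noteq> k" and w: "w \<in> W k"
    have "w \<in> U (Suc k)" using Wsub k w by auto
    then have "real (card (nbhd V E w \<inter> U (Suc j))) \<ge> real (card (U (Suc j))) - \<delta>"
      using nb[rule_format, OF SucK[OF k] \<open>w \<in> U (Suc k)\<close> SucK[OF j]] jk unfolding \<delta>_def n_def by auto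
    then show "real (card (W j - nbhd V E w)) \<le> \<delta>" using nonnb Wsub[OF j] finU[OF j] by blast
  qed
  have sizeW: "\<forall>k\<in>K. real (card (W k)) > real (card S) * \<delta> + real (card S)"
  proof
    fix k assume k: "k \<in> K"
    have rhs: "real (card S) * \<delta> + real (card S) = (real t - 1) * \<delta> + (real t - 1)" using cS t1 by simp
    have "real (card (W k)) > \<epsilon> * real r * real t * real n" using many SucK[OF k] unfolding W_def t_def n_def by blast
    then show "real (card (W k)) > real (card S) * \<delta> + real (card S)" using rhs big key by linarith
  qed
  have finS: "finite S" using finVF S_def by auto
  have colS: "\<forall>s\<in>S. c s \<in> K" using c K_def S_def by auto
  have finW: "\<forall>k\<in>K. finite (W k)" using Wsub finU finite_subset by blast
  have dpos: "\<delta> \<ge> 0" using d1 by simp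
  obtain f where f: "inj_on f S" "\<forall>s\<in>S. f s \<in> W (c s)"
     "\<forall>s\<in>S. \<forall>s'\<in>S. c s \<noteq> c s' \<longrightarrow> {f s, f s'} \<in> E"
    using greedy[OF finS dpos colS finW nadj sizeW] by blast
  have fU: "f s \<in> U (Suc (c s))" if s: "s \<in> S" for s using f(2) s Wsub colS by blast
  have fnot: "f s \<noteq> x" if s: "s \<in> S" for s using fU[OF s] SucK colS s x by blast
  have fV: "f s \<in> V" if s: "s \<in> S" for s using fU[OF s] UV colS s by blast
  have fnb: "{f s, x} \<in> E" if s: "s \<in> S" for s
    using f(2) s unfolding W_def nbhd_def by auto
  define g where "g = f(a := x)"
  have ga: "g a = x" using g_def by auto
  have gS: "s \<in> S \<Longrightarrow> g s = f s" for s using g_def S_def by auto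
  have VFsplit: "y \<in> VF \<Longrightarrow> y = a \<or> y \<in> S" for y using S_def by auto
  have "contains_subgraph V E VF EF"
    unfolding contains_subgraph_def
  proof (intro exI conjI)
    show "inj_on g VF"
    proof (rule inj_onI)
      fix y z assume y: "y \<in> VF" and z: "z \<in> VF" and gyz: "g y = g z"
      show "y = z"
        using VFsplit[OF y] VFsplit[OF z] gyz ga gS fnot f(1) unfolding inj_on_def
        by (metis)
    qed
    show "g ` VF \<subseteq> V"
    proof
      fix y assume "y \<in> g ` VF"
      then obtain z where z: "z \<in> VF" "y = g z" by blast
      then show "y \<in> V" using VFsplit[OF z(1)] ga gS fV x by auto
    qed
    show "\<forall>p\<in>VF. \<forall>q\<in>VF. {p, q} \<in> EF \<longrightarrow> {g p, g q} \<in> E"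
    proof (intro ballI impI)
      fix p q assume p: "p \<in> VF" and q: "q \<in> VF" and pq: "{p,q} \<in> EF"
      have pnq: "p \<noteq> q" using sg_edge_neq[OF sgF pq] .
      consider "p \<in> S" "q \<in> S" | "p \<in> S" "q = a" | "p = a" "q \<in> S" | "p = a" "q = a"
        using VFsplit[OF p] VFsplit[OF q] by blast
      then show "{g p, g q} \<in> E"
      proof cases
        case 1
        then have "{p,q} \<noteq> e" using ab S_def by auto
        then have "c p \<noteq> c q" using c(2) p q pq by auto
        then show ?thesis using f(3) 1 gS by auto
      next
        case 2 then show ?thesis using fnb ga gS by auto
      next
        case 3 then show ?thesis using fnb ga gS by (auto simp: insert_commute)
      next
        case 4 then show ?thesis using pnq by simp
      qed
    qed
  qed
  then show False using free unfolding F_free_def by simp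
qed

theorem lemma3p3:
  fixes r :: nat and VF :: "'b set" and EF :: "'b set set"
  assumes "r \<ge> 2"
    and "simple_graph VF EF"
    and "chromatic_number VF EF = r + 1"
    and "\<exists>e. color_critical_edge VF EF e"
  shows "\<exists>\<epsilon>0::real. \<epsilon>0 > 0 \<and>
    (\<forall>\<epsilon>::real. 0 < \<epsilon> \<and> \<epsilon> < \<epsilon>0 \<longrightarrow>
      (\<exists>n0::nat. \<forall>(V :: nat set) (E :: nat set set) (U :: nat \<Rightarrow> nat set).
         simple_graph V E \<and> F_free V E VF EF \<and> card V \<ge> n0 \<and>
         (\<forall>i\<in>{1..r}. U i \<subseteq> V) \<and>
         (\<forall>i\<in>{1..r}. \<forall>j\<in>{1..r}. i \<noteq> j \<longrightarrow> U i \<inter> U j = {}) \<and>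
         (\<forall>i\<in>{1..r}. real (card (U i)) \<ge> real r * real (card VF) * \<epsilon> * real (card V) + real (card VF)) \<and>
         (\<forall>i\<in>{1..r}. \<forall>v\<in>U i. \<forall>j\<in>{1..r}. j \<noteq> i \<longrightarrow>
             real (card (nbhd V E v \<inter> U j)) \<ge> real (card (U j)) - \<epsilon> * real (card V))
         \<longrightarrow>
         (\<forall>i\<in>{1..r}. independent_set E (U i)) \<and>
         (\<forall>x \<in> V - (\<Union>i\<in>{1..r}. U i). \<exists>i\<in>{1..r}.
             real (card (nbhd V E x \<inter> U i)) \<le> \<epsilon> * real r * real (card VF) * real (card V))))"
proof -
  obtain e where cc: "color_critical_edge VF EF e" using assms(4) by blast
  obtain a b c where abc: "e = {a,b}" "a \<noteq> b" "a \<in> VF" "b \<in> VF" "\<forall>v\<in>VF. c v < r"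
     "\<forall>u\<in>VF. \<forall>v\<in>VF. {u,v} \<in> EF \<and> {u,v} \<noteq> e \<longrightarrow> c u \<noteq> c v" "c a = c b"
    using crit_coloring[OF assms(2) assms(3) cc] by blast
  show ?thesis
  proof (intro exI[of _ "1::real"] conjI allI impI)
    fix \<epsilon> :: real assume eps: "0 < \<epsilon> \<and> \<epsilon> < 1"
    show "\<exists>n0::nat. \<forall>(V :: nat set) (E :: nat set set) (U :: nat \<Rightarrow> nat set).
         simple_graph V E \<and> F_free V E VF EF \<and> card V \<ge> n0 \<and>
         (\<forall>i\<in>{1..r}. U i \<subseteq> V) \<and>
         (\<forall>i\<in>{1..r}. \<forall>j\<in>{1..r}. i \<noteq> j \<longrightarrow> U i \<inter> U j = {}) \<and>
         (\<forall>i\<in>{1..r}. real (card (U i)) \<ge> real r * real (card VF) * \<epsilon> * real (card V) + real (card VF)) \<and>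
         (\<forall>i\<in>{1..r}. \<forall>v\<in>U i. \<forall>j\<in>{1..r}. j \<noteq> i \<longrightarrow>
             real (card (nbhd V E v \<inter> U j)) \<ge> real (card (U j)) - \<epsilon> * real (card V))
         \<longrightarrow>
         (\<forall>i\<in>{1..r}. independent_set E (U i)) \<and>
         (\<forall>x \<in> V - (\<Union>i\<in>{1..r}. U i). \<exists>i\<in>{1..r}.
             real (card (nbhd V E x \<inter> U i)) \<le> \<epsilon> * real r * real (card VF) * real (card V))"
    proof (intro exI[of _ "nat \<lceil>1 / \<epsilon>\<rceil>"] allI impI conjI ballI)
      fix V :: "nat set" and E :: "nat set set" and U :: "nat \<Rightarrow> nat set"
      assume H: "simple_graph V E \<and> F_free V E VF EF \<and> card V \<ge> nat \<lceil>1 / \<epsilon>\<rceil> \<and>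
         (\<forall>i\<in>{1..r}. U i \<subseteq> V) \<and>
         (\<forall>i\<in>{1..r}. \<forall>j\<in>{1..r}. i \<noteq> j \<longrightarrow> U i \<inter> U j = {}) \<and>
         (\<forall>i\<in>{1..r}. real (card (U i)) \<ge> real r * real (card VF) * \<epsilon> * real (card V) + real (card VF)) \<and>
         (\<forall>i\<in>{1..r}. \<forall>v\<in>U i. \<forall>j\<in>{1..r}. j \<noteq> i \<longrightarrow>
             real (card (nbhd V E v \<inter> U j)) \<ge> real (card (U j)) - \<epsilon> * real (card V))"
      have e0: "\<epsilon> > 0" using eps by simp
      have sg: "simple_graph V E" and fr: "F_free V E VF EF" and cV: "card V \<ge> nat \<lceil>1 / \<epsilon>\<rceil>"
        and Us: "\<forall>i\<in>{1..r}. U i \<subseteq> V"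
        and dj: "\<forall>i\<in>{1..r}. \<forall>j\<in>{1..r}. i \<noteq> j \<longrightarrow> U i \<inter> U j = {}"
        and sz: "\<forall>i\<in>{1..r}. real (card (U i)) \<ge> real r * real (card VF) * \<epsilon> * real (card V) + real (card VF)"
        and nb: "\<forall>i\<in>{1..r}. \<forall>v\<in>U i. \<forall>j\<in>{1..r}. j \<noteq> i \<longrightarrow>
             real (card (nbhd V E v \<inter> U j)) \<ge> real (card (U j)) - \<epsilon> * real (card V)"
        using H by blast+
      {
        fix i assume i: "i \<in> {1..r}"
        show "independent_set E (U i)"
          by (rule part_i[OF assms(2) assms(1) abc(1-7) sg fr Us dj sz nb e0 i])
      }
      {
        fix x assume x: "x \<in> V - (\<Union>i\<in>{1..r}. U i)"
        have "real (card V) \<ge> real (nat \<lceil>1 / \<epsilon>\<rceil>)" using cV by simp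
        then have "real (card V) \<ge> 1 / \<epsilon>" using real_nat_ceiling_ge[of "1 / \<epsilon>"] by linarith
        then have nl: "\<epsilon> * real (card V) \<ge> 1" using e0 by (simp add: field_simps)
        show "\<exists>i\<in>{1..r}. real (card (nbhd V E x \<inter> U i)) \<le> \<epsilon> * real r * real (card VF) * real (card V)"
          by (rule part_ii[OF assms(2) assms(1) abc(1-7) sg fr Us nb e0 nl x])
      }
    qed
  qed simp
qed

end
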